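(* Let $A$ be a commutative special Frobenius algebra in $\mathcal{C}$ whose underlying object decomposes as a direct sum $A=1\oplus F$ of the tensor unit $1$ and an object $F$, where $F\neq 0$ and $\theta_F=-\mathrm{id}_F$. Then $F\otimes F\cong 1$.
   Context: Standing assumptions: $k$ is a field with $\mathrm{char}(k)\neq 2$. $\mathcal{C}$ is a $k$-linear additive idempotent-complete ribbon category, strict as a monoidal category, with bilinear tensor product and absolutely simple tensor unit ($\mathrm{End}_{\mathcal{C}}(1)=k\,\mathrm{id}_1$), with braiding $c$ and twist $\theta$. A Frobenius algebra in $\mathcal{C}$ is an object $A$ with associative unital multiplication $\mu:A\otimes A\to A$, unit $\eta:1\to A$, coassociative counital comultiplication $\Delta:A\to A\otimes A$, counit $\epsilon:A\to 1$, such that $(\mathrm{id}_A\otimes\mu)\circ(\Delta\otimes\mathrm{id}_A)=\Delta\circ\mu=(\mu\otimes\mathrm{id}_A)\circ(\mathrm{id}_A\otimes\Delta)$. It is commutative if $\mu\circ c_{A,A}=\mu$, and special if $\epsilon\circ\eta\in k^\times\,\mathrm{id}_1$ and $\mu\circ\Delta\in k^\times\,\mathrm{id}_A$. *)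

theory Defs
  imports Main
begin

text \<open>A k-linear strict monoidal category with braiding, left duals and twist,
  presented by its structure maps.  Every element of type 'm is a morphism
  (with domain Dom f and codomain Cod f); every element of type 'o is an object.
  Comp g f is the composite "g after f".\<close>

record ('o, 'm, 'k) rcat =
  Dom   :: "'m \<Rightarrow> 'o"
  Cod   :: "'m \<Rightarrow> 'o"
  Id    :: "'o \<Rightarrow> 'm"
  Comp  :: "'m \<Rightarrow> 'm \<Rightarrow> 'm"
  Add   :: "'m \<Rightarrow> 'm \<Rightarrow> 'm"
  Smul  :: "'k \<Rightarrow> 'm \<Rightarrow> 'm"
  Zero  :: "'o \<Rightarrow> 'o \<Rightarrow> 'm"
  TensO :: "'o \<Rightarrow> 'o \<Rightarrow> 'o"
  TensM :: "'m \<Rightarrow> 'm \<Rightarrow> 'm"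
  Unit  :: "'o"
  Braid :: "'o \<Rightarrow> 'o \<Rightarrow> 'm"
  Twist :: "'o \<Rightarrow> 'm"
  Dual  :: "'o \<Rightarrow> 'o"
  Ev    :: "'o \<Rightarrow> 'm"
  Coev  :: "'o \<Rightarrow> 'm"

definition hom :: "('o, 'm, 'k) rcat \<Rightarrow> 'm \<Rightarrow> 'o \<Rightarrow> 'o \<Rightarrow> bool" where
  "hom C f X Y \<longleftrightarrow> Dom C f = X \<and> Cod C f = Y"

definition iso_mor :: "('o, 'm, 'k) rcat \<Rightarrow> 'm \<Rightarrow> 'o \<Rightarrow> 'o \<Rightarrow> bool" where
  "iso_mor C f X Y \<longleftrightarrow> hom C f X Y \<and>
     (\<exists>g. hom C g Y X \<and> Comp C g f = Id C X \<and> Comp C f g = Id C Y)"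

definition isomorphic :: "('o, 'm, 'k) rcat \<Rightarrow> 'o \<Rightarrow> 'o \<Rightarrow> bool" where
  "isomorphic C X Y \<longleftrightarrow> (\<exists>f. iso_mor C f X Y)"

definition is_biproduct :: "('o, 'm, 'k) rcat \<Rightarrow> 'o \<Rightarrow> 'o \<Rightarrow> 'o \<Rightarrow> 'm \<Rightarrow> 'm \<Rightarrow> 'm \<Rightarrow> 'm \<Rightarrow> bool" where
  "is_biproduct C S X Y i1 p1 i2 p2 \<longleftrightarrow>
     hom C i1 X S \<and> hom C p1 S X \<and> hom C i2 Y S \<and> hom C p2 S Y \<and>
     Comp C p1 i1 = Id C X \<and> Comp C p2 i2 = Id C Y \<and>
     Add C (Comp C i1 p1) (Comp C i2 p2) = Id C S"

definition zero_object :: "('o, 'm, 'k) rcat \<Rightarrow> 'o \<Rightarrow> bool" where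
  "zero_object C Z \<longleftrightarrow> (\<forall>f. (Dom C f = Z \<longrightarrow> f = Zero C Z (Cod C f)) \<and>
                              (Cod C f = Z \<longrightarrow> f = Zero C (Dom C f) Z))"

definition dual_mor :: "('o, 'm, 'k) rcat \<Rightarrow> 'm \<Rightarrow> 'm" where
  "dual_mor C f = (let X = Dom C f; Y = Cod C f in
     Comp C (TensM C (Ev C Y) (Id C (Dual C X)))
      (Comp C (TensM C (TensM C (Id C (Dual C Y)) f) (Id C (Dual C X)))
        (TensM C (Id C (Dual C Y)) (Coev C X))))"

locale ribbon_category =
  fixes C :: "('o, 'm, 'k::field) rcat"
  assumes char_not_2: "(2::'k) \<noteq> 0"
  and id_hom: "hom C (Id C X) X X"
  and comp_hom: "Dom C g = Cod C f \<Longrightarrow> hom C (Comp C g f) (Dom C f) (Cod C g)"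
  and comp_id_right: "Comp C f (Id C (Dom C f)) = f"
  and comp_id_left: "Comp C (Id C (Cod C f)) f = f"
  and comp_assoc: "\<lbrakk>Dom C h = Cod C g; Dom C g = Cod C f\<rbrakk> \<Longrightarrow>
         Comp C h (Comp C g f) = Comp C (Comp C h g) f"
  and zero_hom: "hom C (Zero C X Y) X Y"
  and add_hom: "\<lbrakk>hom C f X Y; hom C g X Y\<rbrakk> \<Longrightarrow> hom C (Add C f g) X Y"
  and smul_hom: "hom C f X Y \<Longrightarrow> hom C (Smul C a f) X Y"
  and add_assoc: "\<lbrakk>hom C f X Y; hom C g X Y; hom C h X Y\<rbrakk> \<Longrightarrow>
         Add C (Add C f g) h = Add C f (Add C g h)"
  and add_comm: "\<lbrakk>hom C f X Y; hom C g X Y\<rbrakk> \<Longrightarrow> Add C f g = Add C g f"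
  and add_zero: "hom C f X Y \<Longrightarrow> Add C f (Zero C X Y) = f"
  and add_neg: "hom C f X Y \<Longrightarrow> Add C f (Smul C (-1) f) = Zero C X Y"
  and smul_one: "Smul C 1 f = f"
  and smul_smul: "Smul C a (Smul C b f) = Smul C (a * b) f"
  and smul_add_scalar: "Smul C (a + b) f = Add C (Smul C a f) (Smul C b f)"
  and smul_add_mor: "\<lbrakk>hom C f X Y; hom C g X Y\<rbrakk> \<Longrightarrow>
         Smul C a (Add C f g) = Add C (Smul C a f) (Smul C a g)"
  and comp_add_left: "\<lbrakk>hom C f X Y; hom C g X Y; hom C h Y Z\<rbrakk> \<Longrightarrow>
         Comp C h (Add C f g) = Add C (Comp C h f) (Comp C h g)"
  and comp_add_right: "\<lbrakk>hom C f Y Z; hom C g Y Z; hom C h X Y\<rbrakk> \<Longrightarrow>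
         Comp C (Add C f g) h = Add C (Comp C f h) (Comp C g h)"
  and comp_smul_left: "Dom C g = Cod C f \<Longrightarrow> Comp C (Smul C a g) f = Smul C a (Comp C g f)"
  and comp_smul_right: "Dom C g = Cod C f \<Longrightarrow> Comp C g (Smul C a f) = Smul C a (Comp C g f)"
  and has_zero_object: "\<exists>Z. zero_object C Z"
  and has_biproducts: "\<exists>S i1 p1 i2 p2. is_biproduct C S X Y i1 p1 i2 p2"
  and idempotents_split: "\<lbrakk>hom C e X X; Comp C e e = e\<rbrakk> \<Longrightarrow>
         \<exists>Y r s. hom C r X Y \<and> hom C s Y X \<and> Comp C r s = Id C Y \<and> Comp C s r = e"
  and tensO_assoc: "TensO C (TensO C X Y) Z = TensO C X (TensO C Y Z)"
  and tensO_unit_left: "TensO C (Unit C) X = X"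
  and tensO_unit_right: "TensO C X (Unit C) = X"
  and tensM_hom: "hom C (TensM C f g) (TensO C (Dom C f) (Dom C g)) (TensO C (Cod C f) (Cod C g))"
  and tensM_id: "TensM C (Id C X) (Id C Y) = Id C (TensO C X Y)"
  and tensM_interchange: "\<lbrakk>Dom C g = Cod C f; Dom C g' = Cod C f'\<rbrakk> \<Longrightarrow>
         TensM C (Comp C g f) (Comp C g' f') = Comp C (TensM C g g') (TensM C f f')"
  and tensM_assoc: "TensM C (TensM C f g) h = TensM C f (TensM C g h)"
  and tensM_unit_left: "TensM C (Id C (Unit C)) f = f"
  and tensM_unit_right: "TensM C f (Id C (Unit C)) = f"
  and tensM_add_left: "\<lbrakk>hom C f X Y; hom C g X Y\<rbrakk> \<Longrightarrow>
         TensM C (Add C f g) h = Add C (TensM C f h) (TensM C g h)"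
  and tensM_add_right: "\<lbrakk>hom C f X Y; hom C g X Y\<rbrakk> \<Longrightarrow>
         TensM C h (Add C f g) = Add C (TensM C h f) (TensM C h g)"
  and tensM_smul_left: "TensM C (Smul C a f) g = Smul C a (TensM C f g)"
  and tensM_smul_right: "TensM C f (Smul C a g) = Smul C a (TensM C f g)"
  and braid_iso: "iso_mor C (Braid C X Y) (TensO C X Y) (TensO C Y X)"
  and braid_natural: "Comp C (Braid C (Cod C f) (Cod C g)) (TensM C f g) =
         Comp C (TensM C g f) (Braid C (Dom C f) (Dom C g))"
  and braid_hexagon1: "Braid C X (TensO C Y Z) =
         Comp C (TensM C (Id C Y) (Braid C X Z)) (TensM C (Braid C X Y) (Id C Z))"
  and braid_hexagon2: "Braid C (TensO C X Y) Z =
         Comp C (TensM C (Braid C X Z) (Id C Y)) (TensM C (Id C X) (Braid C Y Z))"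
  and ev_hom: "hom C (Ev C X) (TensO C (Dual C X) X) (Unit C)"
  and coev_hom: "hom C (Coev C X) (Unit C) (TensO C X (Dual C X))"
  and zigzag1: "Comp C (TensM C (Id C X) (Ev C X)) (TensM C (Coev C X) (Id C X)) = Id C X"
  and zigzag2: "Comp C (TensM C (Ev C X) (Id C (Dual C X))) (TensM C (Id C (Dual C X)) (Coev C X))
         = Id C (Dual C X)"
  and twist_iso: "iso_mor C (Twist C X) X X"
  and twist_natural: "Comp C (Twist C (Cod C f)) f = Comp C f (Twist C (Dom C f))"
  and twist_tensor: "Twist C (TensO C X Y) =
         Comp C (Comp C (Braid C Y X) (Braid C X Y)) (TensM C (Twist C X) (Twist C Y))"
  and twist_unit: "Twist C (Unit C) = Id C (Unit C)"
  and twist_dual: "Twist C (Dual C X) = dual_mor C (Twist C X)"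
  and unit_nonzero: "Id C (Unit C) \<noteq> Zero C (Unit C) (Unit C)"
  and unit_abs_simple: "hom C f (Unit C) (Unit C) \<Longrightarrow> \<exists>a. f = Smul C a (Id C (Unit C))"

definition frobenius_algebra ::
  "('o, 'm, 'k) rcat \<Rightarrow> 'o \<Rightarrow> 'm \<Rightarrow> 'm \<Rightarrow> 'm \<Rightarrow> 'm \<Rightarrow> bool" where
  "frobenius_algebra C A mu eta delta eps \<longleftrightarrow>
     hom C mu (TensO C A A) A \<and> hom C eta (Unit C) A \<and>
     hom C delta A (TensO C A A) \<and> hom C eps A (Unit C) \<and>
     Comp C mu (TensM C mu (Id C A)) = Comp C mu (TensM C (Id C A) mu) \<and>
     Comp C mu (TensM C eta (Id C A)) = Id C A \<and>
     Comp C mu (TensM C (Id C A) eta) = Id C A \<and>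
     Comp C (TensM C delta (Id C A)) delta = Comp C (TensM C (Id C A) delta) delta \<and>
     Comp C (TensM C eps (Id C A)) delta = Id C A \<and>
     Comp C (TensM C (Id C A) eps) delta = Id C A \<and>
     Comp C (TensM C (Id C A) mu) (TensM C delta (Id C A)) = Comp C delta mu \<and>
     Comp C delta mu = Comp C (TensM C mu (Id C A)) (TensM C (Id C A) delta)"

definition commutative_algebra :: "('o, 'm, 'k) rcat \<Rightarrow> 'o \<Rightarrow> 'm \<Rightarrow> bool" where
  "commutative_algebra C A mu \<longleftrightarrow> Comp C mu (Braid C A A) = mu"

definition special_frobenius ::
  "('o, 'm, 'k::field) rcat \<Rightarrow> 'o \<Rightarrow> 'm \<Rightarrow> 'm \<Rightarrow> 'm \<Rightarrow> 'm \<Rightarrow> bool" where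
  "special_frobenius C A mu eta delta eps \<longleftrightarrow>
     (\<exists>a. a \<noteq> 0 \<and> Comp C eps eta = Smul C a (Id C (Unit C))) \<and>
     (\<exists>b. b \<noteq> 0 \<and> Comp C mu delta = Smul C b (Id C A))"

end

theory Submission
  imports Defs
begin

context ribbon_category
begin

lemma homI: "hom C f (Dom C f) (Cod C f)" by (simp add: hom_def)

lemma dom_id[simp]: "Dom C (Id C X) = X" and cod_id[simp]: "Cod C (Id C X) = X"
  using id_hom[of X] by (auto simp: hom_def)

lemma dom_comp[simp]: "Dom C g = Cod C f \<Longrightarrow> Dom C (Comp C g f) = Dom C f"
  and cod_comp[simp]: "Dom C g = Cod C f \<Longrightarrow> Cod C (Comp C g f) = Cod C g"
  using comp_hom by (auto simp: hom_def)

lemma dom_tens[simp]: "Dom C (TensM C f g) = TensO C (Dom C f) (Dom C g)"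
  and cod_tens[simp]: "Cod C (TensM C f g) = TensO C (Cod C f) (Cod C g)"
  using tensM_hom by (auto simp: hom_def)

lemma dom_smul[simp]: "Dom C (Smul C a f) = Dom C f"
  and cod_smul[simp]: "Cod C (Smul C a f) = Cod C f"
  using smul_hom[OF homI] by (auto simp: hom_def)

lemma dom_zero[simp]: "Dom C (Zero C X Y) = X" and cod_zero[simp]: "Cod C (Zero C X Y) = Y"
  using zero_hom by (auto simp: hom_def)

lemma dom_add[simp]: "Dom C f = Dom C g \<Longrightarrow> Cod C f = Cod C g \<Longrightarrow> Dom C (Add C f g) = Dom C f"
  and cod_add[simp]: "Dom C f = Dom C g \<Longrightarrow> Cod C f = Cod C g \<Longrightarrow> Cod C (Add C f g) = Cod C f"
  using add_hom[of f "Dom C f" "Cod C f" g] by (auto simp: hom_def)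

lemma dom_braid[simp]: "Dom C (Braid C X Y) = TensO C X Y"
  and cod_braid[simp]: "Cod C (Braid C X Y) = TensO C Y X"
  using braid_iso[of X Y] by (auto simp: iso_mor_def hom_def)

lemma dom_twist[simp]: "Dom C (Twist C X) = X"
  and cod_twist[simp]: "Cod C (Twist C X) = X"
  using twist_iso[of X] by (auto simp: iso_mor_def hom_def)

declare tensO_unit_left[simp] tensO_unit_right[simp] tensO_assoc[simp]

lemma comp_idl[simp]: "Cod C f = Y \<Longrightarrow> Comp C (Id C Y) f = f"
  using comp_id_left by auto
lemma comp_idr[simp]: "Dom C f = X \<Longrightarrow> Comp C f (Id C X) = f"
  using comp_id_right by auto

lemma add_self_zero:
  assumes "Dom C x = X" "Cod C x = Y" "Add C x x = x" shows "x = Zero C X Y"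
proof -
  have h: "hom C x X Y" using assms by (simp add: hom_def)
  have "x = Add C x (Zero C X Y)" using add_zero[OF h] by simp
  also have "\<dots> = Add C x (Add C x (Smul C (-1) x))" using add_neg[OF h] by simp
  also have "\<dots> = Add C (Add C x x) (Smul C (-1) x)"
    using add_assoc[OF h h smul_hom[OF h]] by simp
  also have "\<dots> = Zero C X Y" using assms(3) add_neg[OF h] by simp
  finally show ?thesis .
qed

lemma smul_zero_scalar:
  assumes "Dom C f = X" "Cod C f = Y" shows "Smul C 0 f = Zero C X Y"
proof -
  have "Add C (Smul C 0 f) (Smul C 0 f) = Smul C 0 f"
    using smul_add_scalar[of 0 0 f] by simp
  thus ?thesis using add_self_zero[of "Smul C 0 f" X Y] assms by simp
qed

lemma smul_Zero[simp]: "Smul C a (Zero C X Y) = Zero C X Y"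
proof -
  have "Smul C a (Zero C X Y) = Smul C a (Smul C 0 (Zero C X Y))"
    using smul_zero_scalar[of "Zero C X Y" X Y] by simp
  also have "\<dots> = Smul C 0 (Zero C X Y)" by (simp add: smul_smul)
  also have "\<dots> = Zero C X Y" using smul_zero_scalar[of "Zero C X Y" X Y] by simp
  finally show ?thesis .
qed

lemma comp_Zero_right[simp]: "Dom C g = Y \<Longrightarrow> Comp C g (Zero C X Y) = Zero C X (Cod C g)"
proof -
  assume "Dom C g = Y"
  hence "Comp C g (Zero C X Y) = Comp C g (Smul C 0 (Zero C X Y))"
    using smul_zero_scalar[of "Zero C X Y" X Y] by simp
  also have "\<dots> = Smul C 0 (Comp C g (Zero C X Y))" by (rule comp_smul_right) (simp add: \<open>Dom C g = Y\<close>)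
  also have "\<dots> = Zero C X (Cod C g)" using smul_zero_scalar \<open>Dom C g = Y\<close> by simp
  finally show ?thesis .
qed

lemma comp_Zero_left[simp]: "Cod C f = Y \<Longrightarrow> Comp C (Zero C Y Z) f = Zero C (Dom C f) Z"
proof -
  assume "Cod C f = Y"
  hence "Comp C (Zero C Y Z) f = Comp C (Smul C 0 (Zero C Y Z)) f"
    using smul_zero_scalar[of "Zero C Y Z" Y Z] by simp
  also have "\<dots> = Smul C 0 (Comp C (Zero C Y Z) f)" by (rule comp_smul_left) (simp add: \<open>Cod C f = Y\<close>)
  also have "\<dots> = Zero C (Dom C f) Z" using smul_zero_scalar \<open>Cod C f = Y\<close> by simp
  finally show ?thesis .
qed

lemma tens_Zero_right[simp]: "TensM C f (Zero C X Y) = Zero C (TensO C (Dom C f) X) (TensO C (Cod C f) Y)"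
proof -
  have "TensM C f (Zero C X Y) = TensM C f (Smul C 0 (Zero C X Y))"
    using smul_zero_scalar[of "Zero C X Y" X Y] by simp
  also have "\<dots> = Smul C 0 (TensM C f (Zero C X Y))" by (rule tensM_smul_right)
  also have "\<dots> = Zero C (TensO C (Dom C f) X) (TensO C (Cod C f) Y)"
    using smul_zero_scalar by simp
  finally show ?thesis .
qed

lemma add_Zero_right[simp]: "Dom C f = X \<Longrightarrow> Cod C f = Y \<Longrightarrow> Add C f (Zero C X Y) = f"
  using add_zero[of f X Y] by (simp add: hom_def)

lemma add_Zero_left[simp]: "Dom C f = X \<Longrightarrow> Cod C f = Y \<Longrightarrow> Add C (Zero C X Y) f = f"
  using add_zero[of f X Y] add_comm[of "Zero C X Y" X Y f] zero_hom by (simp add: hom_def)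

lemma neg_self_zero:
  assumes "Dom C x = X" "Cod C x = Y" "Smul C (-1) x = x" shows "x = Zero C X Y"
proof -
  have h: "hom C x X Y" using assms by (simp add: hom_def)
  have "Smul C 2 x = Add C (Smul C 1 x) (Smul C 1 x)"
    using smul_add_scalar[of 1 1 x] by simp
  also have "\<dots> = Add C x (Smul C (-1) x)" using assms(3) smul_one by simp
  also have "\<dots> = Zero C X Y" using add_neg[OF h] .
  finally have "Smul C 2 x = Zero C X Y" .
  hence "Smul C (1/2) (Smul C 2 x) = Zero C X Y" by simp
  thus ?thesis using smul_smul char_not_2 smul_one by simp
qed

lemma smul_inj:
  assumes "Dom C f = X" "Cod C f = Y" "f \<noteq> Zero C X Y" "Smul C a f = Smul C b f"
  shows "a = b"
proof (rule ccontr)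
  assume ab: "a \<noteq> b"
  have h: "hom C f X Y" using assms by (simp add: hom_def)
  have "Smul C (a - b) f = Add C (Smul C a f) (Smul C (- b) f)"
    using smul_add_scalar[of a "-b" f] by simp
  also have "\<dots> = Add C (Smul C b f) (Smul C (-1) (Smul C b f))" using assms(4) smul_smul by simp
  also have "\<dots> = Zero C X Y" using add_neg smul_hom[OF h] by blast
  finally have "Smul C (1/(a-b)) (Smul C (a - b) f) = Zero C X Y" by simp
  hence "f = Zero C X Y" using ab smul_smul smul_one by simp
  thus False using assms(3) by simp
qed

lemma comp_assoc'[simp]: "Dom C h = Cod C g \<Longrightarrow> Dom C g = Cod C f \<Longrightarrow>
         Comp C (Comp C h g) f = Comp C h (Comp C g f)"
  using comp_assoc by simp

lemma comp_reassoc: "Comp C g f = h \<Longrightarrow> Dom C g = Cod C f \<Longrightarrow> Dom C f = Cod C x \<Longrightarrow>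
  Comp C g (Comp C f x) = Comp C h x"
  by (simp del: comp_assoc' add: comp_assoc)

lemma interchange: "Dom C g = Cod C f \<Longrightarrow> Dom C g' = Cod C f' \<Longrightarrow>
     Comp C (TensM C g g') (TensM C f f') = TensM C (Comp C g f) (Comp C g' f')"
  using tensM_interchange by simp



lemma main_lemma:
  assumes fr: "frobenius_algebra C A mu eta delta eps"
    and com: "commutative_algebra C A mu"
    and sp: "special_frobenius C A mu eta delta eps"
    and bp: "is_biproduct C A (Unit C) F i1 p1 i2 p2"
    and nz: "\<not> zero_object C F"
    and tw: "Twist C F = Smul C (-1) (Id C F)"
  shows "isomorphic C (TensO C F F) (Unit C)"
proof -
  let ?U = "Unit C"
  let ?I = "Id C"
  note fr' = fr[unfolded frobenius_algebra_def hom_def]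
  note bp' = bp[unfolded is_biproduct_def hom_def]
  have [simp]: "Dom C mu = TensO C A A" "Cod C mu = A" "Dom C eta = ?U" "Cod C eta = A"
    "Dom C delta = A" "Cod C delta = TensO C A A" "Dom C eps = A" "Cod C eps = ?U"
    using fr' by auto
  have [simp]: "Dom C i1 = ?U" "Cod C i1 = A" "Dom C p1 = A" "Cod C p1 = ?U"
    "Dom C i2 = F" "Cod C i2 = A" "Dom C p2 = A" "Cod C p2 = F"
    using bp' by auto
  have [simp]: "Comp C p1 i1 = ?I ?U" "Comp C p2 i2 = ?I F"
    using bp' by auto
  have [simp]: "Cod C x = ?U \<Longrightarrow> Comp C p1 (Comp C i1 x) = x" for x
    by (subst comp_reassoc[of p1 i1 "?I ?U"]) simp_all
  have [simp]: "Cod C x = F \<Longrightarrow> Comp C p2 (Comp C i2 x) = x" for x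
    by (subst comp_reassoc[of p2 i2 "?I F"]) simp_all
  have split: "Add C (Comp C i1 p1) (Comp C i2 p2) = ?I A" using bp' by auto
  have idF: "?I F \<noteq> Zero C F F"
  proof
    assume z: "?I F = Zero C F F"
    have "zero_object C F" unfolding zero_object_def
    proof (intro allI conjI impI)
      fix f assume "Dom C f = F"
      hence "f = Comp C f (?I F)" by simp
      thus "f = Zero C F (Cod C f)" using z \<open>Dom C f = F\<close> by simp
    next
      fix f assume "Cod C f = F"
      hence "f = Comp C (?I F) f" by simp
      thus "f = Zero C (Dom C f) F" using z \<open>Cod C f = F\<close> by simp
    qed
    thus False using nz by simp
  qed
  have p1i2[simp]: "Comp C p1 i2 = Zero C F ?U"
  proof (rule add_self_zero)
    have "Comp C p1 i2 = Comp C p1 (Comp C (?I A) i2)" by simp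
    also have "\<dots> = Comp C p1 (Comp C (Add C (Comp C i1 p1) (Comp C i2 p2)) i2)" using split by simp
    also have "\<dots> = Add C (Comp C p1 i2) (Comp C p1 i2)"
      by (simp add: comp_add_right comp_add_left hom_def)
    finally show "Add C (Comp C p1 i2) (Comp C p1 i2) = Comp C p1 i2" by simp
  qed simp_all
  have p2i1[simp]: "Comp C p2 i1 = Zero C ?U F"
  proof (rule add_self_zero)
    have "Comp C p2 i1 = Comp C p2 (Comp C (?I A) i1)" by simp
    also have "\<dots> = Comp C p2 (Comp C (Add C (Comp C i1 p1) (Comp C i2 p2)) i1)" using split by simp
    also have "\<dots> = Add C (Comp C p2 i1) (Comp C p2 i1)"
      by (simp add: comp_add_right comp_add_left hom_def)
    finally show "Add C (Comp C p2 i1) (Comp C p2 i1) = Comp C p2 i1" by simp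
  qed simp_all
  have [simp]: "Cod C x = F \<Longrightarrow> Comp C p1 (Comp C i2 x) = Zero C (Dom C x) ?U" for x
    by (subst comp_reassoc[of p1 i2 "Zero C F ?U"]) simp_all
  have [simp]: "Cod C x = ?U \<Longrightarrow> Comp C p2 (Comp C i1 x) = Zero C (Dom C x) F" for x
    by (subst comp_reassoc[of p2 i1 "Zero C ?U F"]) simp_all
  note smulsimps[simp] = tensM_smul_left tensM_smul_right smul_smul smul_one comp_smul_left comp_smul_right
  have thi2[simp]: "Comp C (Twist C A) i2 = Smul C (-1) i2"
    using twist_natural[of i2] tw by simp
  have p2th[simp]: "Comp C p2 (Twist C A) = Smul C (-1) p2"
    using twist_natural[of p2] tw by simp
  have theta[simp]: "Comp C (Twist C A) eta = eta"
    using twist_natural[of eta] twist_unit by simp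
  have epsth[simp]: "Comp C eps (Twist C A) = eps"
    using twist_natural[of eps] twist_unit by simp
  have muc: "Comp C mu (Braid C A A) = mu" using com by (simp add: commutative_algebra_def)
  have [simp]: "Cod C y = TensO C A A \<Longrightarrow> Comp C mu (Comp C (Braid C A A) y) = Comp C mu y" for y
    by (subst comp_reassoc[OF muc]) simp_all
  have thmu: "Comp C (Twist C A) mu = Comp C mu (TensM C (Twist C A) (Twist C A))"
    using twist_natural[of mu] twist_tensor[of A A] by simp
  have [simp]: "Cod C y = TensO C A A \<Longrightarrow> Comp C (Twist C A) (Comp C mu y) = Comp C mu (Comp C (TensM C (Twist C A) (Twist C A)) y)" for y
    by (subst comp_reassoc[OF thmu]) simp_all
  have p2thy[simp]: "Cod C y = A \<Longrightarrow> Comp C p2 (Comp C (Twist C A) y) = Smul C (-1) (Comp C p2 y)" for y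
    by (subst comp_reassoc[OF p2th]) simp_all
  define w where "w = Comp C mu (TensM C i2 i2)"
  have [simp]: "Dom C w = TensO C F F" "Cod C w = A" unfolding w_def by simp_all
  have p2w[simp]: "Comp C p2 w = Zero C (TensO C F F) F"
  proof (rule neg_self_zero)
    have "Smul C (-1) (Comp C p2 w) = Comp C p2 (Comp C (Twist C A) w)" by simp
    also have "\<dots> = Comp C p2 (Comp C mu (Comp C (TensM C (Twist C A) (Twist C A)) (TensM C i2 i2)))"
      unfolding w_def by simp
    also have "\<dots> = Comp C p2 w" unfolding w_def by (simp add: interchange)
    finally show "Smul C (-1) (Comp C p2 w) = Comp C p2 w" .
  qed simp_all
  have expand_l: "Cod C x = A \<Longrightarrow> x = Add C (Comp C i1 (Comp C p1 x)) (Comp C i2 (Comp C p2 x))" for x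
  proof -
    assume cx: "Cod C x = A"
    have "x = Comp C (?I A) x" using cx by simp
    also have "\<dots> = Comp C (Add C (Comp C i1 p1) (Comp C i2 p2)) x" using split by simp
    also have "\<dots> = Add C (Comp C i1 (Comp C p1 x)) (Comp C i2 (Comp C p2 x))"
      using cx by (simp add: comp_add_right hom_def)
    finally show ?thesis .
  qed
  have expand_r: "Dom C x = A \<Longrightarrow> x = Add C (Comp C (Comp C x i1) p1) (Comp C (Comp C x i2) p2)" for x
  proof -
    assume cx: "Dom C x = A"
    have "x = Comp C x (?I A)" using cx by simp
    also have "\<dots> = Comp C x (Add C (Comp C i1 p1) (Comp C i2 p2))" using split by simp
    also have "\<dots> = Add C (Comp C (Comp C x i1) p1) (Comp C (Comp C x i2) p2)"
      using cx by (simp add: comp_add_left hom_def)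
    finally show ?thesis .
  qed
  define m where "m = Comp C p1 w"
  have [simp]: "Dom C m = TensO C F F" "Cod C m = ?U" unfolding m_def by simp_all
  have wm: "w = Comp C i1 m"
    using expand_l[of w] unfolding m_def by simp
  have p2eta: "Comp C p2 eta = Zero C ?U F"
  proof (rule neg_self_zero)
    have "Smul C (-1) (Comp C p2 eta) = Comp C p2 (Comp C (Twist C A) eta)" by (rule sym, rule p2thy) simp
    also have "\<dots> = Comp C p2 eta" by simp
    finally show "Smul C (-1) (Comp C p2 eta) = Comp C p2 eta" .
  qed simp_all
  obtain a where pa: "Comp C p1 eta = Smul C a (?I ?U)"
    using unit_abs_simple[of "Comp C p1 eta"] by (auto simp: hom_def)
  have eta_a: "eta = Smul C a i1"
    using expand_l[of eta] p2eta pa by simp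
  have epsthy[simp]: "Cod C y = A \<Longrightarrow> Comp C eps (Comp C (Twist C A) y) = Comp C eps y" for y
    by (subst comp_reassoc[OF epsth]) simp_all
  have epsi2: "Comp C eps i2 = Zero C F ?U"
  proof (rule neg_self_zero)
    have "Smul C (-1) (Comp C eps i2) = Comp C eps (Comp C (Twist C A) i2)" by (simp only: thi2) simp
    also have "\<dots> = Comp C eps i2" by (rule epsthy) simp
    finally show "Smul C (-1) (Comp C eps i2) = Comp C eps i2" .
  qed simp_all
  obtain b where eb: "Comp C eps i1 = Smul C b (?I ?U)"
    using unit_abs_simple[of "Comp C eps i1"] by (auto simp: hom_def)
  have eps_b: "eps = Smul C b p1"
    using expand_r[of eps] epsi2 eb by simp
  have Fnz: "X = Zero C A A \<Longrightarrow> X = ?I A \<Longrightarrow> False" for X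
  proof -
    assume "X = Zero C A A" "X = ?I A"
    hence "Comp C p2 (Comp C (?I A) i2) = Comp C p2 (Comp C (Zero C A A) i2)" by simp
    hence "?I F = Zero C F F" by simp
    thus False using idF by simp
  qed
  define L where "L = Comp C mu (TensM C i1 (?I A))"
  define R where "R = Comp C mu (TensM C (?I A) i1)"
  define PL where "PL = Comp C (TensM C p1 (?I A)) delta"
  define PR where "PR = Comp C (TensM C (?I A) p1) delta"
  have [simp]: "Dom C L = A" "Cod C L = A" "Dom C R = A" "Cod C R = A"
    "Dom C PL = A" "Cod C PL = A" "Dom C PR = A" "Cod C PR = A"
    unfolding L_def R_def PL_def PR_def by simp_all
  have aL: "Smul C a L = ?I A" using fr' eta_a unfolding L_def by simp
  have aR: "Smul C a R = ?I A" using fr' eta_a unfolding R_def by simp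
  have bPL: "Smul C b PL = ?I A" using fr' eps_b unfolding PL_def by simp
  have bPR: "Smul C b PR = ?I A" using fr' eps_b unfolding PR_def by simp
  have a0: "a \<noteq> 0"
  proof
    assume "a = 0"
    hence "Smul C a L = Zero C A A" using smul_zero_scalar[of L A A] by simp
    thus False using aL Fnz by blast
  qed
  have b0: "b \<noteq> 0"
  proof
    assume "b = 0"
    hence "Smul C b PL = Zero C A A" using smul_zero_scalar[of PL A A] by simp
    thus False using bPL Fnz by blast
  qed
  have Lc: "L = Smul C (1/a) (?I A)"
  proof -
    have "L = Smul C (1/a) (Smul C a L)" using a0 by simp
    thus ?thesis using aL by simp
  qed
  have Rc: "R = Smul C (1/a) (?I A)"
  proof -
    have "R = Smul C (1/a) (Smul C a R)" using a0 by simp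
    thus ?thesis using aR by simp
  qed
  have PLc: "PL = Smul C (1/b) (?I A)"
  proof -
    have "PL = Smul C (1/b) (Smul C b PL)" using b0 by simp
    thus ?thesis using bPL by simp
  qed
  have PRc: "PR = Smul C (1/b) (?I A)"
  proof -
    have "PR = Smul C (1/b) (Smul C b PR)" using b0 by simp
    thus ?thesis using bPR by simp
  qed
  have T1: "Comp C mu (TensM C (Comp C i1 p1) (?I A)) = Smul C (1/a) (TensM C p1 (?I A))"
  proof -
    have "TensM C (Comp C i1 p1) (?I A) = Comp C (TensM C i1 (?I A)) (TensM C p1 (?I A))"
      by (simp add: interchange)
    hence "Comp C mu (TensM C (Comp C i1 p1) (?I A)) = Comp C L (TensM C p1 (?I A))"
      unfolding L_def by simp
    thus ?thesis using Lc by simp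
  qed
  have T2: "Comp C mu (TensM C (Comp C i2 p2) (Comp C i1 p1)) =
     Smul C (1/a) (Comp C i2 (Comp C p2 (TensM C (?I A) p1)))"
  proof -
    have "TensM C (Comp C i2 p2) (Comp C i1 p1) = Comp C (TensM C (?I A) i1) (TensM C (Comp C i2 p2) p1)"
      by (simp add: interchange)
    also have "TensM C (Comp C i2 p2) p1 = Comp C (TensM C (Comp C i2 p2) (?I ?U)) (TensM C (?I A) p1)"
      by (simp add: interchange)
    finally have "Comp C mu (TensM C (Comp C i2 p2) (Comp C i1 p1)) =
       Comp C R (Comp C (TensM C (Comp C i2 p2) (?I ?U)) (TensM C (?I A) p1))"
      unfolding R_def by simp
    thus ?thesis using Rc tensM_unit_right by simp
  qed
  have T3: "Comp C mu (TensM C (Comp C i2 p2) (Comp C i2 p2)) = Comp C i1 (Comp C m (TensM C p2 p2))"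
  proof -
    have "TensM C (Comp C i2 p2) (Comp C i2 p2) = Comp C (TensM C i2 i2) (TensM C p2 p2)"
      by (simp add: interchange)
    hence "Comp C mu (TensM C (Comp C i2 p2) (Comp C i2 p2)) = Comp C w (TensM C p2 p2)"
      unfolding w_def by simp
    thus ?thesis using wm by simp
  qed
  have mu_dec: "mu = Add C (Smul C (1/a) (TensM C p1 (?I A)))
     (Add C (Smul C (1/a) (Comp C i2 (Comp C p2 (TensM C (?I A) p1))))
            (Comp C i1 (Comp C m (TensM C p2 p2))))"
  proof -
    have "mu = Comp C mu (TensM C (?I A) (?I A))" by (simp add: tensM_id)
    also have "\<dots> = Comp C mu (TensM C (Add C (Comp C i1 p1) (Comp C i2 p2)) (?I A))"
      using split by simp
    also have "\<dots> = Add C (Comp C mu (TensM C (Comp C i1 p1) (?I A)))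
        (Comp C mu (TensM C (Comp C i2 p2) (?I A)))"
      by (simp add: tensM_add_left comp_add_left hom_def)
    also have "\<dots> = Add C (Comp C mu (TensM C (Comp C i1 p1) (?I A)))
        (Comp C mu (TensM C (Comp C i2 p2) (Add C (Comp C i1 p1) (Comp C i2 p2))))"
      using split by simp
    also have "\<dots> = Add C (Comp C mu (TensM C (Comp C i1 p1) (?I A)))
        (Add C (Comp C mu (TensM C (Comp C i2 p2) (Comp C i1 p1)))
               (Comp C mu (TensM C (Comp C i2 p2) (Comp C i2 p2))))"
      by (simp add: tensM_add_right comp_add_left hom_def)
    finally show ?thesis using T1 T2 T3 by simp
  qed
  obtain beta where beta: "Comp C mu delta = Smul C beta (?I A)"
    using sp unfolding special_frobenius_def by blast
  have [simp]: "Comp C (TensM C p1 (?I A)) delta = Smul C (1/b) (?I A)" using PLc unfolding PL_def .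
  have [simp]: "Comp C (TensM C (?I A) p1) delta = Smul C (1/b) (?I A)" using PRc unfolding PR_def .
  have PLy[simp]: "Cod C y = A \<Longrightarrow> Comp C (TensM C p1 (?I A)) (Comp C delta y) = Smul C (1/b) y" for y
    using comp_reassoc[of "TensM C p1 (?I A)" delta "Smul C (1/b) (?I A)" y] PLc unfolding PL_def by simp
  define k where "k = 1/a * (1/b)"
  define d where "d = Comp C (TensM C p2 p2) (Comp C delta i1)"
  have [simp]: "Dom C d = ?U" "Cod C d = TensO C F F" unfolding d_def by simp_all
  have X_dec: "Comp C mu delta = Add C (Smul C k (?I A)) (Add C (Smul C k (Comp C i2 p2))
      (Comp C i1 (Comp C m (Comp C (TensM C p2 p2) delta))))"
  proof -
    have "Comp C mu delta = Comp C (Add C (Smul C (1/a) (TensM C p1 (?I A)))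
     (Add C (Smul C (1/a) (Comp C i2 (Comp C p2 (TensM C (?I A) p1))))
            (Comp C i1 (Comp C m (TensM C p2 p2))))) delta" using mu_dec by simp
    also have "\<dots> = Add C (Comp C (Smul C (1/a) (TensM C p1 (?I A))) delta)
     (Add C (Comp C (Smul C (1/a) (Comp C i2 (Comp C p2 (TensM C (?I A) p1)))) delta)
            (Comp C (Comp C i1 (Comp C m (TensM C p2 p2))) delta))"
      by (simp add: comp_add_right hom_def)
    finally show ?thesis unfolding k_def by simp
  qed
  have "Comp C p2 (Comp C (Comp C mu delta) i2) = Add C (Smul C k (?I F)) (Add C (Smul C k (?I F)) (Zero C F F))"
    unfolding X_dec by (simp add: comp_add_right comp_add_left hom_def)
  hence "Smul C beta (?I F) = Smul C (k + k) (?I F)"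
    unfolding beta using smul_add_scalar[of k k "?I F"] by simp
  hence bk: "beta = k + k" using smul_inj[OF _ _ idF] by simp
  obtain c where mdc: "Comp C m d = Smul C c (?I ?U)"
    using unit_abs_simple[of "Comp C m d"] by (auto simp: hom_def)
  have "Comp C p1 (Comp C (Comp C mu delta) i1) = Add C (Smul C k (?I ?U)) (Add C (Zero C ?U ?U) (Comp C m d))"
    unfolding X_dec d_def by (simp add: comp_add_right comp_add_left hom_def)
  hence "Smul C beta (?I ?U) = Smul C (k + c) (?I ?U)"
    unfolding beta mdc using smul_add_scalar[of k c "?I ?U"] by simp
  hence "beta = k + c" using smul_inj[OF _ _ unit_nonzero] by simp
  hence ck: "c = k" using bk by simp
  have K: "Comp C p2 (Comp C mu (TensM C i2 (?I A))) = Smul C (1/a) (TensM C (?I F) p1)"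
  proof -
    have e1: "TensM C i2 (Comp C i1 p1) = Comp C (TensM C (?I A) i1) (Comp C i2 (TensM C (?I F) p1))"
    proof -
      have "Comp C i2 (TensM C (?I F) p1) = Comp C (TensM C i2 (?I ?U)) (TensM C (?I F) p1)"
        using tensM_unit_right by simp
      thus ?thesis by (simp add: interchange)
    qed
    have e2: "TensM C i2 (Comp C i2 p2) = Comp C (TensM C i2 i2) (TensM C (?I F) p2)"
      by (simp add: interchange)
    have "TensM C i2 (?I A) = Add C (TensM C i2 (Comp C i1 p1)) (TensM C i2 (Comp C i2 p2))"
      using split tensM_add_right[of "Comp C i1 p1" A A "Comp C i2 p2" i2] by (simp add: hom_def)
    hence "Comp C p2 (Comp C mu (TensM C i2 (?I A))) =
      Add C (Comp C p2 (Comp C mu (TensM C i2 (Comp C i1 p1)))) (Comp C p2 (Comp C mu (TensM C i2 (Comp C i2 p2))))"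
      by (simp add: comp_add_left hom_def)
    also have "Comp C p2 (Comp C mu (TensM C i2 (Comp C i2 p2))) = Zero C (TensO C F A) F"
    proof -
      have "Comp C p2 (Comp C mu (TensM C i2 (Comp C i2 p2))) = Comp C (Comp C p2 w) (TensM C (?I F) p2)"
        unfolding e2 w_def by simp
      thus ?thesis by simp
    qed
    also have "Comp C p2 (Comp C mu (TensM C i2 (Comp C i1 p1))) = Smul C (1/a) (TensM C (?I F) p1)"
    proof -
      have "Comp C p2 (Comp C mu (TensM C i2 (Comp C i1 p1))) = Comp C p2 (Comp C R (Comp C i2 (TensM C (?I F) p1)))"
        unfolding e1 R_def by simp
      thus ?thesis using Rc by simp
    qed
    finally show ?thesis by simp
  qed
  have frob8: "Comp C delta mu = Comp C (TensM C mu (?I A)) (TensM C (?I A) delta)" using fr' by blast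
  have dm: "Comp C d m = Smul C k (?I (TensO C F F))"
  proof -
    have "Comp C d m = Comp C (TensM C p2 p2) (Comp C delta w)"
      unfolding d_def wm by simp
    also have "\<dots> = Comp C (TensM C p2 p2) (Comp C (Comp C delta mu) (TensM C i2 i2))"
      unfolding w_def by simp
    also have "\<dots> = Comp C (TensM C p2 p2) (Comp C (TensM C mu (?I A)) (Comp C (TensM C (?I A) delta) (TensM C i2 i2)))"
      unfolding frob8 by simp
    also have "\<dots> = Comp C (TensM C (Comp C p2 mu) p2) (TensM C i2 (Comp C delta i2))"
      by (simp add: interchange comp_assoc del: comp_assoc')
    also have "TensM C i2 (Comp C delta i2) = Comp C (TensM C (TensM C i2 (?I A)) (?I A)) (TensM C (?I F) (Comp C delta i2))"
      by (simp add: interchange tensM_assoc tensM_id)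
    also have "Comp C (TensM C (Comp C p2 mu) p2) (Comp C (TensM C (TensM C i2 (?I A)) (?I A)) (TensM C (?I F) (Comp C delta i2)))
       = Comp C (TensM C (Comp C p2 (Comp C mu (TensM C i2 (?I A)))) p2) (TensM C (?I F) (Comp C delta i2))"
      by (simp add: interchange comp_assoc del: comp_assoc')
    also have "\<dots> = Smul C (1/a) (Comp C (TensM C (?I F) (TensM C p1 p2)) (TensM C (?I F) (Comp C delta i2)))"
      unfolding K by (simp add: tensM_assoc)
    also have "TensM C p1 p2 = Comp C p2 (TensM C p1 (?I A))"
    proof -
      have h: "Comp C (TensM C (?I ?U) p2) (TensM C p1 (?I A)) = TensM C p1 p2" by (simp add: interchange)
      show ?thesis using h unfolding tensM_unit_left by simp
    qed
    finally show ?thesis unfolding k_def by (simp add: interchange tensM_id)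
  qed
  have k0: "k \<noteq> 0" unfolding k_def using a0 b0 by simp
  have "iso_mor C m (TensO C F F) ?U"
    unfolding iso_mor_def
  proof (intro conjI exI)
    show "hom C m (TensO C F F) ?U" by (simp add: hom_def)
    show "hom C (Smul C (1/k) d) ?U (TensO C F F)" by (simp add: hom_def)
    show "Comp C (Smul C (1/k) d) m = ?I (TensO C F F)" using dm k0 by simp
    show "Comp C m (Smul C (1/k) d) = ?I ?U" using mdc ck k0 by simp
  qed
  thus ?thesis unfolding isomorphic_def by blast
qed

end
theorem mainTheorem2:
  fixes C :: "('o, 'm, 'k::field) rcat"
    and A F :: 'o and mu eta delta eps i1 p1 i2 p2 :: 'm
  assumes "ribbon_category C"
    and "frobenius_algebra C A mu eta delta eps"
    and "commutative_algebra C A mu"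
    and "special_frobenius C A mu eta delta eps"
    and "is_biproduct C A (Unit C) F i1 p1 i2 p2"
    and "\<not> zero_object C F"
    and "Twist C F = Smul C (-1) (Id C F)"
  shows "isomorphic C (TensO C F F) (Unit C)"
  using ribbon_category.main_lemma[OF assms] .

end
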